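(* Let $\langle B,\wedge,{}'\rangle$ be an algebra with $\wedge$ binary and ${}'$ unary satisfying $x\wedge(y\wedge z)\approx y\wedge(z\wedge x)$ and $x\approx (x'\wedge y)'\wedge(x'\wedge y')'$. Then $x\wedge(y\wedge z)=(x\wedge y)\wedge z$ for all $x,y,z\in B$. *)

theory Defs
  imports Main
begin

end

theory Submission
  imports Defs
begin

theorem corollary4p21:
  fixes meet :: "'a \<Rightarrow> 'a \<Rightarrow> 'a" and c :: "'a \<Rightarrow> 'a"
  assumes cyc: "\<And>x y z. meet x (meet y z) = meet y (meet z x)"
    and ax: "\<And>x y. x = meet (c (meet (c x) y)) (c (meet (c x) (c y)))"
  shows "\<forall>x y z. meet x (meet y z) = meet (meet x y) z"
proof -
  have "\<forall>a aa ab. meet (c (meet (c ab) aa)) (meet (c (meet (c ab) (c aa))) a) = meet a ab"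
    by (metis (no_types) ax cyc)
  then have A: "\<forall>a aa ab ac. meet (meet a aa) (meet ab ac) = meet a (meet aa (meet ab ac))"
    by (metis cyc)
  show ?thesis
  proof (intro allI)
    fix x y z
    have "meet (meet x y) z = meet x (meet y z)"
      using A ax[of z z] by metis
    then show "meet x (meet y z) = meet (meet x y) z" by simp
  qed
qed

end
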